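(* Let $P$ be a finite poset and let $E,F,E',F'$ be order filters of $P$. The following are equivalent: (1) $\mathcal{F}(E,F)=\mathcal{F}(E',F')$; (2) $\chi_{E'}$ and $\chi_{F'}$ are a pair of opposite (antipodal) vertices of the cube $\mathcal{F}(E,F)$; (3) $\chi_E+\chi_F=\chi_{E'}+\chi_{F'}$; (4) $E\cap F=E'\cap F'$ and $E\cup F=E'\cup F'$. In particular $\mathcal{F}(E,F)=\mathcal{F}(E\cap F,E\cup F)$, which is combinatorially a cube.
   Context: For a finite poset $P$, an order filter is a subset $F\subseteq P$ such that $a\in F$ and $a<_P b$ imply $b\in F$; $\chi_S\in\{0,1\}^P$ denotes the characteristic vector of $S\subseteq P$. The order polytope of $P$ is $\mathcal{O}(P)=\{x\in[0,1]^P: x_a\le x_b \text{ for all } a<_P b\}=\mathrm{conv}\{\chi_F: F \text{ an order filter}\}$. For order filters $E,F$, $\mathcal{F}(E,F)$ denotes the minimal face of $\mathcal{O}(P)$ containing $\chi_E$ and $\chi_F$. For comparable filters $E\subseteq F$ it is known that $\mathcal{F}(E,F)=\chi_E+\sum_{i=1}^d[0,\chi_{P'_i}]$ where $P'_1,\dots,P'_d$ are the connected components of $P|_{F\setminus E}$, a $d$-dimensional cube; two vertices of a cube are opposite if no proper face of the cube contains both. *)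

theory Defs
  imports "HOL-Analysis.Analysis"
begin

text \<open>The finite poset P is the finite type 'a with its partial order; the space
  R^P is real ^ 'a.\<close>

definition order_filter :: "('a::{finite,order}) set \<Rightarrow> bool" where
  "order_filter F \<longleftrightarrow> (\<forall>a b. a \<in> F \<and> a < b \<longrightarrow> b \<in> F)"

definition chi :: "('a::finite) set \<Rightarrow> real ^ 'a" where
  "chi S = (\<chi> i. if i \<in> S then 1 else 0)"

definition order_polytope :: "(real ^ ('a::{finite,order})) set" where
  "order_polytope = {x. (\<forall>i. 0 \<le> x $ i \<and> x $ i \<le> 1) \<and> (\<forall>a b. a < b \<longrightarrow> x $ a \<le> x $ b)}"

definition min_face :: "('a::{finite,order}) set \<Rightarrow> ('a::{finite,order}) set \<Rightarrow> (real ^ ('a::{finite,order})) set" where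
  "min_face E F = \<Inter>{f. f face_of (order_polytope :: (real ^ ('a::{finite,order})) set) \<and> chi E \<in> f \<and> chi F \<in> f}"

definition opposite_vertices :: "(real ^ 'n) set \<Rightarrow> real ^ 'n \<Rightarrow> real ^ 'n \<Rightarrow> bool" where
  "opposite_vertices C u v \<longleftrightarrow> u extreme_point_of C \<and> v extreme_point_of C \<and>
     (\<forall>f. f face_of C \<and> f \<noteq> C \<longrightarrow> \<not> (u \<in> f \<and> v \<in> f))"

end

theory Submission
  imports Defs
begin

definition GG :: "('a::{finite,order}) set \<Rightarrow> ('a::{finite,order}) set \<Rightarrow> (real ^ ('a::{finite,order})) set" where
  "GG I U = {x \<in> order_polytope. (\<forall>i\<in>I. x$i = 1) \<and> (\<forall>i. i \<notin> U \<longrightarrow> x$i = 0) \<and>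
     (\<forall>a b. a < b \<and> a \<in> U - I \<and> b \<in> U - I \<longrightarrow> x$a = x$b)}"

lemma cvx_eq:
  fixes p q p' q' u :: real
  assumes "p \<le> p'" "q \<le> q'" "0 < u" "u < 1" "(1-u)*p + u*q = (1-u)*p' + u*q'"
  shows "p = p' \<and> q = q'"
proof -
  have "(1-u)*p \<le> (1-u)*p'" using assms by (intro mult_left_mono) auto
  moreover have "u*q \<le> u*q'" using assms by (intro mult_left_mono) auto
  ultimately have "(1-u)*p = (1-u)*p'" "u*q = u*q'" using assms(5) by linarith+
  thus ?thesis using assms by auto
qed

lemma chi_comp: "chi S $ i = (if i \<in> S then 1 else 0)"
  by (simp add: chi_def)

lemma chi_poly: "order_filter E \<Longrightarrow> chi E \<in> order_polytope"
  by (auto simp: order_polytope_def chi_comp order_filter_def)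

lemma GG_face: "GG I U face_of order_polytope"
proof -
  have cv: "convex (GG I U)"
    unfolding convex_def
  proof (intro ballI allI impI)
    fix x y :: "real^('a::{finite,order})" and u v :: real
    assume x: "x \<in> GG I U" and y: "y \<in> GG I U" and uv: "0 \<le> u" "0 \<le> v" "u + v = 1"
    have hx: "\<And>i. 0 \<le> x $ i \<and> x $ i \<le> 1" "\<And>a b. a < b \<Longrightarrow> x $ a \<le> x $ b"
      "\<And>i. i\<in>I \<Longrightarrow> x $ i = 1" "\<And>i. i \<notin> U \<Longrightarrow> x $ i = 0"
      "\<And>a b. a < b \<Longrightarrow> a \<in> U - I \<Longrightarrow> b \<in> U - I \<Longrightarrow> x $ a = x $ b"
      using x by (auto simp: GG_def order_polytope_def)
    have hy: "\<And>i. 0 \<le> y $ i \<and> y $ i \<le> 1" "\<And>a b. a < b \<Longrightarrow> y $ a \<le> y $ b"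
      "\<And>i. i\<in>I \<Longrightarrow> y $ i = 1" "\<And>i. i \<notin> U \<Longrightarrow> y $ i = 0"
      "\<And>a b. a < b \<Longrightarrow> a \<in> U - I \<Longrightarrow> b \<in> U - I \<Longrightarrow> y $ a = y $ b"
      using y by (auto simp: GG_def order_polytope_def)
    let ?z = "u *\<^sub>R x + v *\<^sub>R y"
    have z: "\<And>i. ?z $ i = u * x$i + v * y$i" by simp
    have 1: "0 \<le> ?z $ i \<and> ?z $ i \<le> 1" for i
    proof -
      have "u * x$i \<le> u * 1" "v * y$i \<le> v * 1" using hx hy uv by (intro mult_left_mono; simp)+
      then show ?thesis using hx hy uv z by simp
    qed
    have 2: "?z $ a \<le> ?z $ b" if "a < b" for a b
    proof -
      have "u * x$a \<le> u * x$b" "v * y$a \<le> v * y$b" using hx hy uv that by (intro mult_left_mono; simp)+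
      then show ?thesis using z by simp
    qed
    have 3: "?z $ i = 1" if "i \<in> I" for i using hx hy uv that by simp
    have 4: "?z $ i = 0" if "i \<notin> U" for i using hx hy uv that by simp
    have 5: "?z $ a = ?z $ b" if "a < b" "a \<in> U - I" "b \<in> U - I" for a b
      using hx(5)[OF that] hy(5)[OF that] by simp
    show "?z \<in> GG I U" using 1 2 3 4 5 by (auto simp: GG_def order_polytope_def)
  qed
  show ?thesis unfolding face_of_def
  proof (intro conjI cv; (intro ballI impI)?)
    show "GG I U \<subseteq> order_polytope" by (auto simp: GG_def)
  next
    fix a b x assume ab: "a \<in> order_polytope" "b \<in> order_polytope" and x: "x \<in> GG I U"
      and seg: "x \<in> open_segment a b"
    then obtain u where u: "0 < u" "u < 1" "x = (1 - u) *\<^sub>R a + u *\<^sub>R b"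
      by (auto simp: in_segment)
    have xc: "\<And>i. x$i = (1-u)*a$i + u*b$i" using u by simp
    have pa: "\<And>i. 0 \<le> a$i \<and> a$i \<le> 1" "\<And>i j. i < j \<Longrightarrow> a$i \<le> a$j"
      and pb: "\<And>i. 0 \<le> b$i \<and> b$i \<le> 1" "\<And>i j. i < j \<Longrightarrow> b$i \<le> b$j"
      using ab by (auto simp: order_polytope_def)
    have X: "\<forall>i\<in>I. x$i = 1" "\<forall>i. i \<notin> U \<longrightarrow> x$i = 0"
      "\<forall>p q. p < q \<and> p \<in> U - I \<and> q \<in> U - I \<longrightarrow> x$p = x$q"
      using x by (auto simp: GG_def)
    have A1: "a$i = 1 \<and> b$i = 1" if "i \<in> I" for i
    proof -
      have "(1-u)*a$i + u*b$i = (1-u)*1 + u*1" using X(1) that xc[of i] by simp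
      then show ?thesis using cvx_eq[of "a$i" 1 "b$i" 1 u] pa(1)[of i] pb(1)[of i] u(1,2) by blast
    qed
    have A2: "a$i = 0 \<and> b$i = 0" if "i \<notin> U" for i
    proof -
      have "(1-u)*0 + u*0 = (1-u)*a$i + u*b$i" using X(2) that xc[of i] by simp
      then show ?thesis using cvx_eq[of 0 "a$i" 0 "b$i" u] pa(1)[of i] pb(1)[of i] u(1,2) by auto
    qed
    have A3: "a$p = a$q \<and> b$p = b$q" if pq: "p < q \<and> p \<in> U - I \<and> q \<in> U - I" for p q
    proof -
      have "(1-u)*a$p + u*b$p = (1-u)*a$q + u*b$q" using X(3) pq xc[of p] xc[of q] by metis
      then show ?thesis using cvx_eq[of "a$p" "a$q" "b$p" "b$q" u] pa(2)[of p q] pb(2)[of p q] u(1,2) pq by blast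
    qed
    show "a \<in> GG I U \<and> b \<in> GG I U" using A1 A2 A3 ab by (auto simp: GG_def)
  qed
qed


lemma filter_inter: "order_filter E \<Longrightarrow> order_filter F \<Longrightarrow> order_filter (E \<inter> F)"
  and filter_union: "order_filter E \<Longrightarrow> order_filter F \<Longrightarrow> order_filter (E \<union> F)"
  by (auto simp: order_filter_def)

lemma chi_in_GG:
  assumes "order_filter E" "order_filter F"
  shows "chi E \<in> GG (E \<inter> F) (E \<union> F)"
  using assms chi_poly[OF assms(1)]
  by (auto simp: GG_def chi_comp order_filter_def)

lemma GG_sub:
  fixes E F :: "('a::{finite,order}) set"
  assumes fE: "order_filter E" and fF: "order_filter F" and f: "f face_of order_polytope"
    and cE: "chi E \<in> f" and cF: "chi F \<in> f"
  shows "GG (E \<inter> F) (E \<union> F) \<subseteq> f"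
proof
  fix x assume x: "x \<in> GG (E \<inter> F) (E \<union> F)"
  define m where "m = (1/2) *\<^sub>R chi E + (1/2) *\<^sub>R chi F"
  have mf: "m \<in> f" unfolding m_def
    using convexD[OF face_of_imp_convex[OF f] cE cF, of "1/2" "1/2"] by simp
  define w where "w = chi E + chi F - x"
  have hx: "\<And>i. 0 \<le> x $ i \<and> x $ i \<le> 1" "\<And>a b. a < b \<Longrightarrow> x $ a \<le> x $ b"
      "\<And>i. i\<in>E \<inter> F \<Longrightarrow> x $ i = 1" "\<And>i. i \<notin> E \<union> F \<Longrightarrow> x $ i = 0"
      "\<And>a b. a < b \<Longrightarrow> a \<in> (E \<union> F) - (E \<inter> F) \<Longrightarrow> b \<in> (E \<union> F) - (E \<inter> F) \<Longrightarrow> x $ a = x $ b"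
    using x by (auto simp: GG_def order_polytope_def)
  have wc: "w $ i = (if i \<in> E then 1 else 0) + (if i \<in> F then 1 else 0) - x $ i" for i
    by (simp add: w_def chi_comp)
  have wb: "0 \<le> w $ i \<and> w $ i \<le> 1" for i
    using hx(1)[of i] hx(3)[of i] hx(4)[of i] wc[of i] by (auto split: if_splits)
  have wo: "w $ a \<le> w $ b" if ab: "a < b" for a b
  proof (cases "a \<in> E \<inter> F")
    case True
    then have "b \<in> E \<inter> F" using ab fE fF by (auto simp: order_filter_def)
    then show ?thesis using True hx(3) wc by simp
  next
    case nI: False
    show ?thesis
    proof (cases "a \<in> E \<union> F")
      case False
      then show ?thesis using wc[of a] hx(4)[of a] wb[of b] by simp
    next
      case True
      then have bU: "b \<in> E \<union> F" using ab fE fF by (auto simp: order_filter_def)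
      show ?thesis
      proof (cases "b \<in> E \<inter> F")
        case True
        then show ?thesis using wc[of b] hx(3)[of b] wb[of a] by simp
      next
        case False
        have "x $ a = x $ b" using hx(5)[OF ab] True nI bU False by blast
        moreover have "a \<in> E \<longleftrightarrow> b \<in> E"
          using ab fE fF True nI bU False by (auto simp: order_filter_def)
        moreover have "a \<in> F \<longleftrightarrow> b \<in> F"
          using ab fE fF True nI bU False by (auto simp: order_filter_def)
        ultimately show ?thesis using wc[of a] wc[of b] by simp
      qed
    qed
  qed
  have wP: "w \<in> order_polytope" using wb wo by (auto simp: order_polytope_def)
  have xP: "x \<in> order_polytope" using x by (auto simp: GG_def)
  have mxw: "m = (1 - 1/2) *\<^sub>R x + (1/2) *\<^sub>R w"
    unfolding m_def w_def by (simp add: algebra_simps)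
  show "x \<in> f"
  proof (cases "x = w")
    case True
    then have "m = x" using mxw by (metis scaleR_collapse)
    then show ?thesis using mf by simp
  next
    case False
    then have "m \<in> open_segment x w" unfolding in_segment using mxw
      by (intro conjI exI[of _ "1/2"]) auto
    then show ?thesis using face_ofD[OF f _ xP wP mf] by blast
  qed
qed

lemma min_face_GG:
  assumes "order_filter E" "order_filter F"
  shows "min_face E F = GG (E \<inter> F) (E \<union> F)"
proof
  show "min_face E F \<subseteq> GG (E \<inter> F) (E \<union> F)" unfolding min_face_def
    using GG_face chi_in_GG[OF assms] chi_in_GG[OF assms(2,1)]
    by (intro Inter_lower) (auto simp: Int_commute Un_commute)
  show "GG (E \<inter> F) (E \<union> F) \<subseteq> min_face E F" unfolding min_face_def
    using GG_sub[OF assms] by blast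
qed


lemma GG_cube:
  fixes I U :: "('a::{finite,order}) set"
  assumes fI: "order_filter I" and fU: "order_filter U" and IU: "I \<subseteq> U"
  shows "\<exists>Q :: 'a set set. (\<forall>S\<in>Q. S \<noteq> {}) \<and> pairwise disjnt Q \<and>
         GG I U = {x. \<exists>t. (\<forall>S\<in>Q. 0 \<le> t S \<and> t S \<le> 1) \<and>
                              x = chi I + (\<Sum>S\<in>Q. t S *\<^sub>R chi S)}"
proof -
  define D where "D = U - I"
  define r where "r = {(a,b). a \<in> D \<and> b \<in> D \<and> (a < b \<or> b < a)}"
  define cls where "cls a = r\<^sup>* `` {a}" for a
  define Q where "Q = cls ` D"
  have symr: "sym r" by (auto simp: r_def sym_def)
  have rs: "(b,a) \<in> r\<^sup>*" if "(a,b) \<in> r\<^sup>*" for a b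
    using symD[OF sym_rtrancl[OF symr] that] .
  have rD: "b \<in> D" if "(a,b) \<in> r\<^sup>*" "a \<in> D" for a b
    using that by (induction rule: rtrancl_induct) (auto simp: r_def)
  have self: "a \<in> cls a" for a by (simp add: cls_def)
  have mem: "i \<in> cls a \<longleftrightarrow> cls i = cls a" for i a
  proof
    assume "i \<in> cls a"
    then have ai: "(a,i) \<in> r\<^sup>*" by (simp add: cls_def)
    show "cls i = cls a" unfolding cls_def
      using ai rs rtrancl_trans by (auto intro: rtrancl_trans)
  next
    assume "cls i = cls a" then show "i \<in> cls a" using self by metis
  qed
  have clsD: "cls a \<subseteq> D" if "a \<in> D" for a
    using rD that by (auto simp: cls_def)
  have sumc: "(\<Sum>S\<in>Q. t S *\<^sub>R chi S) $ i = (if i \<in> D then t (cls i) else 0)" for t i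
  proof -
    have "(\<Sum>S\<in>Q. t S *\<^sub>R chi S) $ i = (\<Sum>S\<in>Q. if i \<in> S then t S else 0)"
      by (simp add: chi_comp if_distrib cong: if_cong)
    also have "\<dots> = (if i \<in> D then t (cls i) else 0)"
    proof (cases "i \<in> D")
      case True
      have "(\<Sum>S\<in>Q. if i \<in> S then t S else 0) = (\<Sum>S\<in>Q. if cls i = S then t S else 0)"
        by (intro sum.cong refl) (auto simp: Q_def mem)
      also have "\<dots> = t (cls i)" using True by (simp add: Q_def)
      finally show ?thesis using True by simp
    next
      case False
      have "(\<Sum>S\<in>Q. if i \<in> S then t S else 0) = (\<Sum>S\<in>Q. 0)"
        using False clsD by (intro sum.cong refl) (auto simp: Q_def)
      then show ?thesis using False by simp
    qed
    finally show ?thesis .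
  qed
  have ID: "I \<inter> D = {}" by (auto simp: D_def)
  show ?thesis
  proof (intro exI[of _ Q] conjI)
    show "\<forall>S\<in>Q. S \<noteq> {}" using self by (auto simp: Q_def)
    show "pairwise disjnt Q" unfolding pairwise_def disjnt_def Q_def
      using mem by blast
    show "GG I U = {x. \<exists>t. (\<forall>S\<in>Q. 0 \<le> t S \<and> t S \<le> 1) \<and> x = chi I + (\<Sum>S\<in>Q. t S *\<^sub>R chi S)}"
    proof (intro set_eqI iffI)
      fix x assume x: "x \<in> GG I U"
      have hx: "\<And>i. 0 \<le> x $ i \<and> x $ i \<le> 1"
        "\<And>i. i\<in>I \<Longrightarrow> x $ i = 1" "\<And>i. i \<notin> U \<Longrightarrow> x $ i = 0"
        "\<And>a b. a < b \<Longrightarrow> a \<in> D \<Longrightarrow> b \<in> D \<Longrightarrow> x $ a = x $ b"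
        using x by (auto simp: GG_def order_polytope_def D_def)
      have xr: "x $ a = x $ b" if "(a,b) \<in> r\<^sup>*" for a b
        using that by (induction rule: rtrancl_induct) (auto simp: r_def dest: hx(4))
      define t where "t S = x $ (SOME a. a \<in> S)" for S
      have tc: "t (cls i) = x $ i" for i
      proof -
        have "(SOME a. a \<in> cls i) \<in> cls i" using self by (metis someI)
        then have "(i, SOME a. a \<in> cls i) \<in> r\<^sup>*" by (simp add: cls_def)
        then show ?thesis using xr by (simp add: t_def)
      qed
      show "x \<in> {x. \<exists>t. (\<forall>S\<in>Q. 0 \<le> t S \<and> t S \<le> 1) \<and> x = chi I + (\<Sum>S\<in>Q. t S *\<^sub>R chi S)}"
      proof (intro CollectI exI[of _ t] conjI)
        show "\<forall>S\<in>Q. 0 \<le> t S \<and> t S \<le> 1" using tc hx(1) by (auto simp: Q_def)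
        show "x = chi I + (\<Sum>S\<in>Q. t S *\<^sub>R chi S)"
        proof (subst vec_eq_iff, intro allI)
          fix i
          show "x $ i = (chi I + (\<Sum>S\<in>Q. t S *\<^sub>R chi S)) $ i"
          proof -
            have "(chi I + (\<Sum>S\<in>Q. t S *\<^sub>R chi S)) $ i = chi I $ i + (\<Sum>S\<in>Q. t S *\<^sub>R chi S) $ i"
              by (simp only: vector_add_component)
            also have "\<dots> = (if i \<in> I then 1 else 0) + (if i \<in> D then t (cls i) else 0)"
              by (simp only: sumc chi_comp)
            finally show ?thesis using hx(2)[of i] hx(3)[of i] tc[of i] ID IU by (auto simp: D_def)
          qed
        qed
      qed
    next
      fix x assume "x \<in> {x. \<exists>t. (\<forall>S\<in>Q. 0 \<le> t S \<and> t S \<le> 1) \<and> x = chi I + (\<Sum>S\<in>Q. t S *\<^sub>R chi S)}"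
      then obtain t where t: "\<forall>S\<in>Q. 0 \<le> t S \<and> t S \<le> 1"
        and xe: "x = chi I + (\<Sum>S\<in>Q. t S *\<^sub>R chi S)" by blast
      have xc: "x $ i = (if i \<in> I then 1 else 0) + (if i \<in> D then t (cls i) else 0)" for i
      proof -
        have "x $ i = chi I $ i + (\<Sum>S\<in>Q. t S *\<^sub>R chi S) $ i" by (simp only: xe vector_add_component)
        then show ?thesis by (simp only: sumc chi_comp)
      qed
      have tb: "i \<in> D \<Longrightarrow> 0 \<le> t (cls i) \<and> t (cls i) \<le> 1" for i using t by (auto simp: Q_def)
      have b: "0 \<le> x $ i \<and> x $ i \<le> 1" for i
        using xc[of i] tb[of i] ID by auto
      have o: "x $ a \<le> x $ b" if ab: "a < b" for a b
      proof (cases "a \<in> I")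
        case True
        then have "b \<in> I" using fI ab by (auto simp: order_filter_def)
        then show ?thesis using True xc ID by auto
      next
        case nI: False
        show ?thesis
        proof (cases "a \<in> U")
          case False
          then show ?thesis using xc[of a] b[of b] nI by (simp add: D_def)
        next
          case True
          then have bU: "b \<in> U" using fU ab by (auto simp: order_filter_def)
          show ?thesis
          proof (cases "b \<in> I")
            case True
            then show ?thesis using xc[of b] b[of a] ID by auto
          next
            case False
            then have "(a,b) \<in> r" using ab True nI bU by (auto simp: r_def D_def)
            then have "cls a = cls b" using mem self by (metis r_into_rtrancl cls_def Image_singleton_iff)
            then show ?thesis using xc[of a] xc[of b] True nI bU False by (simp add: D_def)
          qed
        qed
      qed
      have e: "x $ a = x $ b" if "a < b" "a \<in> U - I" "b \<in> U - I" for a b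
      proof -
        have "(a,b) \<in> r" using that by (auto simp: r_def D_def)
        then have "cls a = cls b" using mem self by (metis r_into_rtrancl cls_def Image_singleton_iff)
        then show ?thesis using xc[of a] xc[of b] that by (simp add: D_def)
      qed
      show "x \<in> GG I U" using b o e xc ID IU
        by (auto simp: GG_def order_polytope_def D_def)
    qed
  qed
qed


lemma chi_extreme:
  assumes "order_filter E"
  shows "chi E extreme_point_of order_polytope"
proof -
  have "GG E E = {chi E}"
  proof
    show "{chi E} \<subseteq> GG E E" using chi_in_GG[OF assms assms] by simp
    show "GG E E \<subseteq> {chi E}"
    proof
      fix x assume "x \<in> GG E E"
      then have "x $ i = chi E $ i" for i by (auto simp: GG_def chi_comp)
      then show "x \<in> {chi E}" by (simp add: vec_eq_iff)
    qed
  qed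
  then have "{chi E} face_of order_polytope" using GG_face[of E E] by simp
  then show ?thesis by (simp add: face_of_singleton)
qed

lemma chi_eq_iff:
  "chi E + chi F = chi E' + chi F' \<longleftrightarrow> E \<inter> F = E' \<inter> F' \<and> E \<union> F = E' \<union> F'"
proof
  assume h: "chi E + chi F = chi E' + chi F'"
  have hh: "\<And>i. (if i \<in> E then 1 else 0) + (if i \<in> F then 1 else 0)
      = (if i \<in> E' then 1 else 0) + (if i \<in> F' then (1::real) else 0)"
    using h by (simp add: vec_eq_iff chi_comp)
  then show "E \<inter> F = E' \<inter> F' \<and> E \<union> F = E' \<union> F'"
  proof -
    have "(i \<in> E \<and> i \<in> F \<longleftrightarrow> i \<in> E' \<and> i \<in> F') \<and> (i \<in> E \<or> i \<in> F \<longleftrightarrow> i \<in> E' \<or> i \<in> F')" for i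
      using hh[of i] by (cases "i \<in> E"; cases "i \<in> F"; cases "i \<in> E'"; cases "i \<in> F'") simp_all
    then show ?thesis by blast
  qed
next
  assume "E \<inter> F = E' \<inter> F' \<and> E \<union> F = E' \<union> F'"
  then have hh: "\<And>i. (i \<in> E \<and> i \<in> F \<longleftrightarrow> i \<in> E' \<and> i \<in> F') \<and> (i \<in> E \<or> i \<in> F \<longleftrightarrow> i \<in> E' \<or> i \<in> F')"
    by blast
  then have "(if i \<in> E then 1 else 0) + (if i \<in> F then 1 else 0)
      = (if i \<in> E' then 1 else 0) + (if i \<in> F' then (1::real) else 0)" for i
    using hh[of i] by (cases "i \<in> E"; cases "i \<in> F"; cases "i \<in> E'"; cases "i \<in> F'") simp_all
  then show "chi E + chi F = chi E' + chi F'"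
    by (simp add: vec_eq_iff chi_comp)
qed

lemma cube_part:
  fixes E F :: "('a::{finite,order}) set"
  assumes "order_filter E" "order_filter F"
  shows "\<exists>Q :: 'a set set. (\<forall>S\<in>Q. S \<noteq> {}) \<and> pairwise disjnt Q \<and>
         min_face E F = {x. \<exists>t. (\<forall>S\<in>Q. 0 \<le> t S \<and> t S \<le> 1) \<and>
                              x = chi (E \<inter> F) + (\<Sum>S\<in>Q. t S *\<^sub>R chi S)}"
  unfolding min_face_GG[OF assms]
  by (rule GG_cube[OF filter_inter[OF assms] filter_union[OF assms]]) blast

theorem corollary3p2:
  fixes E F E' F' :: "('a::{finite,order}) set"
  assumes "order_filter E" "order_filter F" "order_filter E'" "order_filter F'"
  shows "(min_face E F = min_face E' F' \<longleftrightarrow> opposite_vertices (min_face E F) (chi E') (chi F'))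
    \<and> (opposite_vertices (min_face E F) (chi E') (chi F') \<longleftrightarrow> chi E + chi F = chi E' + chi F')
    \<and> (chi E + chi F = chi E' + chi F' \<longleftrightarrow> E \<inter> F = E' \<inter> F' \<and> E \<union> F = E' \<union> F')
    \<and> min_face E F = min_face (E \<inter> F) (E \<union> F)
    \<and> (\<exists>Q :: 'a set set. (\<forall>S\<in>Q. S \<noteq> {}) \<and> pairwise disjnt Q \<and>
         min_face E F = {x. \<exists>t. (\<forall>S\<in>Q. 0 \<le> t S \<and> t S \<le> 1) \<and>
                              x = chi (E \<inter> F) + (\<Sum>S\<in>Q. t S *\<^sub>R chi S)})"
proof -
  have mfGG: "min_face A B = GG (A \<inter> B) (A \<union> B)" if "order_filter A" "order_filter B" for A B
    using min_face_GG[OF that] .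
  have mface: "min_face A B face_of order_polytope" if "order_filter A" "order_filter B" for A B
    using mfGG[OF that] GG_face by simp
  have memA: "chi A \<in> min_face A B" and memB: "chi B \<in> min_face A B"
    if "order_filter A" "order_filter B" for A B
    using mfGG[OF that] chi_in_GG[OF that] chi_in_GG[OF that(2,1)] by (simp_all add: Int_commute Un_commute)
  have minl: "min_face A B \<subseteq> f" if "f face_of order_polytope" "chi A \<in> f" "chi B \<in> f" for A B f
    unfolding min_face_def using that by blast
  define C where "C = min_face E F"
  have C: "C face_of order_polytope" using mface[OF assms(1,2)] by (simp add: C_def)
  have e14: "min_face E F = min_face E' F' \<longleftrightarrow> E \<inter> F = E' \<inter> F' \<and> E \<union> F = E' \<union> F'"
  proof
    assume h: "min_face E F = min_face E' F'"
    have gg: "I \<subseteq> A \<and> A \<subseteq> U" if "chi A \<in> GG I U" for A I U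
    proof -
      have "\<forall>i\<in>I. chi A $ i = 1" "\<forall>i. i \<notin> U \<longrightarrow> chi A $ i = 0" using that by (simp_all add: GG_def)
      then show ?thesis by (auto simp: chi_comp split: if_splits)
    qed
    have "chi E \<in> min_face E' F'" "chi F \<in> min_face E' F'"
      using h memA[OF assms(1,2)] memB[OF assms(1,2)] by simp_all
    then have a: "chi E \<in> GG (E' \<inter> F') (E' \<union> F')" "chi F \<in> GG (E' \<inter> F') (E' \<union> F')"
      unfolding mfGG[OF assms(3,4)] .
    have "chi E' \<in> min_face E F" "chi F' \<in> min_face E F"
      using h memA[OF assms(3,4)] memB[OF assms(3,4)] by simp_all
    then have b: "chi E' \<in> GG (E \<inter> F) (E \<union> F)" "chi F' \<in> GG (E \<inter> F) (E \<union> F)"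
      unfolding mfGG[OF assms(1,2)] .
    show "E \<inter> F = E' \<inter> F' \<and> E \<union> F = E' \<union> F'"
      using gg[OF a(1)] gg[OF a(2)] gg[OF b(1)] gg[OF b(2)] by blast
  next
    assume h: "E \<inter> F = E' \<inter> F' \<and> E \<union> F = E' \<union> F'"
    show "min_face E F = min_face E' F'"
      unfolding mfGG[OF assms(1,2)] mfGG[OF assms(3,4)] using h by simp
  qed
  have e12: "min_face E F = min_face E' F' \<longleftrightarrow> opposite_vertices C (chi E') (chi F')"
  proof
    assume h: "min_face E F = min_face E' F'"
    have inC: "chi E' \<in> C" "chi F' \<in> C" using h memA[OF assms(3,4)] memB[OF assms(3,4)]
      by (auto simp: C_def)
    have sub: "C \<subseteq> order_polytope" using C face_of_imp_subset by blast
    have ext: "chi A extreme_point_of C" if "order_filter A" "chi A \<in> C" for A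
      using chi_extreme[OF that(1)] that(2) sub by (auto simp: extreme_point_of_def)
    show "opposite_vertices C (chi E') (chi F')" unfolding opposite_vertices_def
    proof (intro conjI ext assms inC allI impI)
      fix f assume f: "f face_of C \<and> f \<noteq> C"
      show "\<not> (chi E' \<in> f \<and> chi F' \<in> f)"
      proof
        assume "chi E' \<in> f \<and> chi F' \<in> f"
        moreover have "f face_of order_polytope" using face_of_trans[OF _ C] f by blast
        ultimately have "min_face E' F' \<subseteq> f" using minl by blast
        then show False using f h face_of_imp_subset[of f C] by (auto simp: C_def)
      qed
    qed
  next
    assume h: "opposite_vertices C (chi E') (chi F')"
    then have inC: "chi E' \<in> C" "chi F' \<in> C" by (auto simp: opposite_vertices_def extreme_point_of_def)
    have s: "min_face E' F' \<subseteq> C" using minl[OF C inC] .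
    have "min_face E' F' face_of C"
      using face_of_subset[OF mface[OF assms(3,4)] s] C face_of_imp_subset by blast
    then have "min_face E' F' = C" using h memA[OF assms(3,4)] memB[OF assms(3,4)]
      unfolding opposite_vertices_def by metis
    then show "min_face E F = min_face E' F'" by (simp add: C_def)
  qed
  have e4: "min_face E F = min_face (E \<inter> F) (E \<union> F)"
  proof -
    have "(E \<inter> F) \<inter> (E \<union> F) = E \<inter> F" "(E \<inter> F) \<union> (E \<union> F) = E \<union> F" by blast+
    then show ?thesis using mfGG[OF assms(1,2)] mfGG[OF filter_inter[OF assms(1,2)] filter_union[OF assms(1,2)]]
      by simp
  qed
  have e12': "min_face E F = min_face E' F' \<longleftrightarrow> opposite_vertices (min_face E F) (chi E') (chi F')"
    using e12 unfolding C_def .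
  show ?thesis
  proof (intro conjI)
    show "min_face E F = min_face E' F' \<longleftrightarrow> opposite_vertices (min_face E F) (chi E') (chi F')" by (rule e12')
    show "opposite_vertices (min_face E F) (chi E') (chi F') \<longleftrightarrow> chi E + chi F = chi E' + chi F'"
      using e12' e14 chi_eq_iff[of E F E' F'] by (simp only:)
  qed (rule chi_eq_iff e4 cube_part[OF assms(1,2)])+
qed

end
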